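(* Let $n \ge 1$. Define $F_0(k) = k$ for all $k \ge 1$, and for $1 \le q \le n$ define $F_q$ on $\{1, \ldots, 2^n\}$ inductively by $F_q(1) = 0$ and, for $k \ge 2$, $$F_q(k) = \max_{1 \le k' \le k/2} \bigl( F_q(k') + F_q(k-k') + F_{q-1}(k') \bigr).$$ Then for all $1 \le q \le n$ and $1 \le k \le 2^n$, $$F_q(k) = \sum_{i=0}^{k-1} h_q(i).$$
   Context: For $i \in [0:2^n-1]$, $h(i)$ denotes the number of ones in the binary representation of $i$, and $h_q(i) = \binom{h(i)}{q}$ (so $h_0(i) = 1$ and $\sum_{i=0}^{k-1} h_0(i) = k$). The maximum is over integers $k'$. *)

theory Defs
  imports Main
begin

fun h :: "nat \<Rightarrow> nat" where
  "h i = (if i = 0 then 0 else i mod 2 + h (i div 2))"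

definition hq :: "nat \<Rightarrow> nat \<Rightarrow> nat" where
  "hq q i = h i choose q"

text \<open>F q k; F 0 k = k, and for q \<ge> 1: F q 1 = 0 and for k \<ge> 2 the max recursion.
  (The value at k = 0 for q \<ge> 1 is an irrelevant convention.)\<close>
function F :: "nat \<Rightarrow> nat \<Rightarrow> nat" where
  "F 0 k = k"
| "F (Suc q) k = (if k \<le> 1 then 0 else
      Max ((\<lambda>k'. F (Suc q) k' + F (Suc q) (k - k') + F q k') ` {1..k div 2}))"
  by pat_completeness auto
termination
  by (relation "measures [fst, snd]") auto

end

theory Submission
  imports Defs
begin

definition S :: "nat \<Rightarrow> nat \<Rightarrow> nat" where
  "S q k = (\<Sum>i<k. h i choose q)"

definition Sm :: "nat \<Rightarrow> nat \<Rightarrow> nat" where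
  "Sm q k = (case q of 0 \<Rightarrow> 0 | Suc p \<Rightarrow> S p k)"

lemma h_double: "h (2*m) = h m"
  by (subst h.simps) auto

lemma h_odd: "h (Suc (2*m)) = h m + 1"
  by (subst h.simps) auto

lemma h_0[simp]: "h 0 = 0" by (subst h.simps) auto

declare h.simps[simp del]

lemma S_Suc: "S q (Suc k) = S q k + (h k choose q)"
  by (simp add: S_def)

lemma S_0[simp]: "S q 0 = 0" by (simp add: S_def)
lemma Sm_0[simp]: "Sm q 0 = 0" by (simp add: Sm_def split: nat.split)

lemma S0: "S 0 k = k" by (simp add: S_def)

lemma Sm_Suc: "Sm q (Suc k) = Sm q k + (case q of 0 \<Rightarrow> 0 | Suc p \<Rightarrow> h k choose p)"
  by (simp add: Sm_def S_Suc split: nat.split)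

lemma choose_Suc_case: "Suc n choose q = (n choose q) + (case q of 0 \<Rightarrow> 0 | Suc p \<Rightarrow> n choose p)"
  by (cases q) auto

lemma S_double: "S q (2*m) = 2 * S q m + Sm q m"
proof (induction m)
  case 0 then show ?case by simp
next
  case (Suc m)
  have "S q (2*Suc m) = S q (Suc (Suc (2*m)))" by simp
  also have "\<dots> = S q (2*m) + (h (2*m) choose q) + (h (2*m+1) choose q)"
    by (simp add: S_Suc)
  also have "\<dots> = 2 * S q (Suc m) + Sm q (Suc m)"
    using Suc by (simp add: h_double h_odd S_Suc Sm_Suc choose_Suc_case)
  finally show ?case .
qed

lemma S_odd: "S q (2*m+1) = S q m + S q (m+1) + Sm q m"
  using S_double[of q m] by (simp add: S_Suc h_double)

lemma S_mono: "x \<le> y \<Longrightarrow> S q x \<le> S q y"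
  unfolding S_def by (rule sum_mono2) auto

lemma Sm_Suc_q: "Sm (Suc p) k = S p k" by (simp add: Sm_def)

lemma ineq: "a \<le> b \<Longrightarrow> S q a + S q b + Sm q a \<le> S q (a+b)"
proof (induction q arbitrary: a b)
  case 0 then show ?case by (simp add: S0 Sm_def)
next
  case (Suc p)
  note outer = Suc.IH
  let ?A = "S (Suc p)" and ?B = "S p" and ?C = "Sm p"
  have "\<forall>a b. a + b = n \<longrightarrow> a \<le> b \<longrightarrow> ?A a + ?A b + ?B a \<le> ?A (a+b)" for n
  proof (induction n rule: less_induct)
    case (less n)
    show ?case
    proof (intro allI impI)
      fix a b assume ab: "a + b = n" "a \<le> b"
      have IH: "\<And>x y. x + y < a + b \<Longrightarrow> x \<le> y \<Longrightarrow> ?A x + ?A y + ?B x \<le> ?A (x+y)"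
        using less ab by blast
      show "?A a + ?A b + ?B a \<le> ?A (a+b)"
      proof (cases "a = 0")
        case True then show ?thesis by simp
      next
        case a0: False
        obtain x r where a: "a = 2*x + r" and r: "r < 2"
          by (metis div_mult_mod_eq mod_less_divisor zero_less_numeral mult.commute)
        obtain y s where b: "b = 2*y + s" and s: "s < 2"
          by (metis div_mult_mod_eq mod_less_divisor zero_less_numeral mult.commute)
        have dA: "\<And>m. ?A (2*m) = 2 * ?A m + ?B m" using S_double Sm_Suc_q by metis
        have oA: "\<And>m. ?A (2*m+1) = ?A m + ?A (m+1) + ?B m" using S_odd Sm_Suc_q by metis
        have dB: "\<And>m. ?B (2*m) = 2 * ?B m + ?C m" using S_double by metis
        have oB: "\<And>m. ?B (2*m+1) = ?B m + ?B (m+1) + ?C m" using S_odd by metis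
        consider "r = 0" "s = 0" | "r = 0" "s = 1" | "r = 1" "s = 0" | "r = 1" "s = 1"
          using r s by linarith
        then show ?thesis
        proof cases
          case 1
          have xy: "x \<le> y" "x > 0" using ab a b 1 a0 by auto
          have i1: "?A x + ?A y + ?B x \<le> ?A (x+y)" using IH[of x y] xy a b 1 by simp
          have o1: "?B x + ?B y + ?C x \<le> ?B (x+y)" using outer xy by blast
          have e: "a + b = 2*(x+y)" using a b 1 by simp
          show ?thesis unfolding e using i1 o1 dA[of x] dA[of y] dA[of "x+y"] dB[of x] a b 1
            by simp
        next
          case 2
          have xy: "x \<le> y" "x > 0" using ab a b 2 a0 by auto
          have i1: "?A x + ?A y + ?B x \<le> ?A (x+y)" using IH[of x y] xy a b 2 by simp
          have i2: "?A x + ?A (y+1) + ?B x \<le> ?A (x+(y+1))" using IH[of x "y+1"] xy a b 2 by simp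
          have o1: "?B x + ?B y + ?C x \<le> ?B (x+y)" using outer xy by blast
          have e: "a + b = 2*(x+y)+1" using a b 2 by simp
          show ?thesis unfolding e using i1 i2 o1 dA[of x] oA[of y] oA[of "x+y"] dB[of x] a b 2
            by simp
        next
          case 3
          have xy: "x + 1 \<le> y" using ab a b 3 by auto
          have i1: "?A x + ?A y + ?B x \<le> ?A (x+y)" using IH[of x y] xy a b 3 by simp
          have i2: "?A (x+1) + ?A y + ?B (x+1) \<le> ?A ((x+1)+y)" using IH[of "x+1" y] xy a b 3 by simp
          have o1: "?B x + ?B y + ?C x \<le> ?B (x+y)" using outer xy by simp
          have e: "a + b = 2*(x+y)+1" using a b 3 by simp
          show ?thesis unfolding e using i1 i2 o1 oA[of x] dA[of y] oA[of "x+y"] oB[of x] a b 3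
            by simp
        next
          case 4
          have xy: "x \<le> y" using ab a b 4 by auto
          have e: "a + b = 2*(x+y+1)" using a b 4 by simp
          have i1: "?A x + ?A (y+1) + ?B x \<le> ?A (x+(y+1))" using IH[of x "y+1"] xy a b 4 by simp
          show ?thesis
          proof (cases "x = y")
            case True
            show ?thesis unfolding e using i1 oA[of x] oB[of x] dA[of "x+y+1"] a b 4 True
              by (simp add: mult_2)
          next
            case False
            have xy2: "x + 1 \<le> y" using xy False by simp
            have i2: "?A (x+1) + ?A y + ?B (x+1) \<le> ?A ((x+1)+y)" using IH[of "x+1" y] xy2 a b 4 by simp
            have o1: "?B x + ?B (y+1) + ?C x \<le> ?B (x+(y+1))" using outer[of x "y+1"] xy by simp
            have m: "?B y \<le> ?B (y+1)" by (rule S_mono) simp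
            show ?thesis unfolding e using i1 i2 o1 m oA[of x] oA[of y] oB[of x] dA[of "x+y+1"] a b 4
              by simp
          qed
        qed
      qed
    qed
  qed
  then show ?case unfolding Sm_Suc_q using Suc.prems by blast
qed

declare F.simps(2)[simp del]

lemma F_S: "1 \<le> k \<Longrightarrow> F q k = S q k"
proof (induction q arbitrary: k)
  case 0 then show ?case by (simp add: S0)
next
  case (Suc p)
  show ?case using Suc.prems
  proof (induction k rule: less_induct)
    case (less k)
    show ?case
    proof (cases "k \<le> 1")
      case True
      then have "k = 1" using less.prems by simp
      have "F (Suc p) 1 = 0" by (subst F.simps) simp
      then show ?thesis using \<open>k = 1\<close> by (simp add: S_def)
    next
      case False
      let ?g = "\<lambda>k'. F (Suc p) k' + F (Suc p) (k - k') + F p k'"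
      let ?f = "\<lambda>k'. S (Suc p) k' + S (Suc p) (k - k') + S p k'"
      have eq: "?g ` {1..k div 2} = ?f ` {1..k div 2}"
      proof (rule image_cong[OF refl])
        fix k' assume "k' \<in> {1..k div 2}"
        then have "1 \<le> k'" "k' < k" "1 \<le> k - k'" "k - k' < k" using False by auto
        then show "?g k' = ?f k'" using less.IH Suc.IH by simp
      qed
      have le: "?f k' \<le> S (Suc p) k" if "k' \<in> {1..k div 2}" for k'
      proof -
        have "k' \<le> k - k'" using that by auto
        have "k' + (k - k') = k" using that by auto
        then show ?thesis using ineq[OF \<open>k' \<le> k - k'\<close>, of "Suc p"] by (simp add: Sm_Suc_q)
      qed
      have mem: "k div 2 \<in> {1..k div 2}" using False by auto
      have att: "?f (k div 2) = S (Suc p) k"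
      proof (cases "even k")
        case True
        then obtain m where "k = 2*m" by blast
        then show ?thesis using S_double[of "Suc p" m] by (simp add: Sm_Suc_q)
      next
        case False
        then obtain m where "k = 2*m+1" using oddE by blast
        then show ?thesis using S_odd[of "Suc p" m] by (simp add: Sm_Suc_q)
      qed
      have "Max (?f ` {1..k div 2}) = S (Suc p) k"
      proof (rule antisym)
        show "Max (?f ` {1..k div 2}) \<le> S (Suc p) k"
          apply (rule Max.boundedI)
          using le mem by auto
        show "S (Suc p) k \<le> Max (?f ` {1..k div 2})"
        proof -
          have "?f (k div 2) \<in> ?f ` {1..k div 2}" using mem by (rule imageI)
          then have "?f (k div 2) \<le> Max (?f ` {1..k div 2})" by (intro Max_ge) simp_all
          then show ?thesis using att by simp
        qed
      qed
      moreover have "F (Suc p) k = Max (?g ` {1..k div 2})"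
        by (subst F.simps(2)) (rule if_not_P[OF False])
      ultimately show ?thesis using eq by metis
    qed
  qed
qed

theorem lemma3:
  fixes n q k :: nat
  assumes "n \<ge> 1" and "1 \<le> q" and "q \<le> n" and "1 \<le> k" and "k \<le> 2 ^ n"
  shows "F q k = (\<Sum>i<k. hq q i)"
  using F_S[OF assms(4), of q] by (simp add: S_def hq_def)

end
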